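(* Let $k\ge2$. There exists an integer $m$ and a bipartite construction $B$ on $m$ vertices which contains a $K_k$-factor with at least $\lambda_k m$ red edges as well as a $K_k$-factor with at least $\lambda_k m$ blue edges.
   Context: A $K_k$-factor of $K_n$ ($k\mid n$) is a collection of $n/k$ vertex-disjoint copies of $K_k$ covering all vertices. The bipartite construction with ratio $\rho\in[0,1]$ is the red/blue-coloring of $K_n$ obtained by partitioning $V(K_n)=X\cup Y$ with $|X|=\rho n$, coloring all edges touching $X$ with one color and all edges inside $Y$ with the other; a bipartite construction is one with some ratio $\rho$. For $k\ge2$, $\lambda_k$ is the supremum of all $\lambda$ such that for every $n$ divisible by $k$ and every $\rho\in[0,1]$, the $n$-vertex bipartite construction with ratio $\rho$ has a $K_k$-factor with at least $\lambda n$ edges of the same color. *)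

theory Defs
  imports Complex_Main "HOL-Library.Disjoint_Sets"
begin

datatype colour = Red | Blue

definition other_colour :: "colour \<Rightarrow> colour" where
  "other_colour c = (if c = Red then Blue else Red)"

text \<open>Vertices of K_n are 0,...,n-1; an edge is a 2-element subset.
  The bipartite construction with parameters (x, c): X = {0..<x} (so the ratio is x/n),
  every edge touching X gets colour c, every edge inside Y = {x..<n} gets the other colour.\<close>

definition bip_colour :: "nat \<Rightarrow> colour \<Rightarrow> nat set \<Rightarrow> colour" where
  "bip_colour x c e = (if (\<exists>v\<in>e. v < x) then c else other_colour c)"

text \<open>A K_k-factor of K_n: a partition of the vertex set into parts of size k
  (each part spans a copy of K_k).\<close>

definition Kk_factor :: "nat \<Rightarrow> nat \<Rightarrow> nat set set \<Rightarrow> bool" where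
  "Kk_factor k n F \<longleftrightarrow> partition_on {0..<n} F \<and> (\<forall>P\<in>F. card P = k)"

definition factor_edges :: "nat set set \<Rightarrow> nat set set" where
  "factor_edges F = {e. \<exists>P\<in>F. e \<subseteq> P \<and> card e = 2}"

definition colour_count :: "nat \<Rightarrow> colour \<Rightarrow> nat set set \<Rightarrow> colour \<Rightarrow> nat" where
  "colour_count x c F d = card {e \<in> factor_edges F. bip_colour x c e = d}"

definition lambda_k :: "nat \<Rightarrow> real" where
  "lambda_k k = Sup {lam. \<forall>n x c. k dvd n \<longrightarrow> x \<le> n \<longrightarrow>
      (\<exists>F d. Kk_factor k n F \<and> real (colour_count x c F d) \<ge> lam * real n)}"

end

theory Submission
  imports Defs
begin

lemma union_intervals:
  fixes S :: "nat \<Rightarrow> nat"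
  assumes "\<And>j. S j \<le> S (Suc j)"
  shows "(\<Union>j<q. {S j..<S (Suc j)}) = {S 0..<S q}"
proof (induction q)
  case 0 then show ?case by simp
next
  case (Suc q)
  have "S 0 \<le> S q" using lift_Suc_mono_le[of S 0 q] assms by auto
  then show ?case using Suc assms[of q] by (auto simp: lessThan_Suc)
qed

lemma two_interval_factor:
  fixes S T :: "nat \<Rightarrow> nat"
  assumes mS: "\<And>j. S j \<le> S (Suc j)" and mT: "\<And>j. T j \<le> T (Suc j)"
    and S0: "S 0 = 0" and T0: "T 0 = 0" and Sq: "S q = x0" and Tq: "T q = n - x0" and xn: "x0 \<le> n"
    and sz: "\<And>j. j < q \<Longrightarrow> S (Suc j) - S j + (T (Suc j) - T j) = k" and k1: "k \<ge> 1"
    and Pdef: "\<And>j. P j = {S j..<S (Suc j)} \<union> {x0 + T j..<x0 + T (Suc j)}"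
  shows "Kk_factor k n (P ` {..<q})" "inj_on P {..<q}"
    "\<And>j. j < q \<Longrightarrow> P j \<inter> {0..<x0} = {S j..<S (Suc j)}"
    "\<And>j. j < q \<Longrightarrow> P j - {0..<x0} = {x0 + T j..<x0 + T (Suc j)}"
proof -
  have Sle: "S j \<le> S j'" if "j \<le> j'" for j j' using lift_Suc_mono_le[of S, OF mS that] .
  have Tle: "T j \<le> T j'" if "j \<le> j'" for j j' using lift_Suc_mono_le[of T, OF mT that] .
  have Sx: "S j \<le> x0" if "j \<le> q" for j using Sle[OF that] Sq by simp
  show X: "P j \<inter> {0..<x0} = {S j..<S (Suc j)}" if "j < q" for j
    using Sx[of "Suc j"] that Pdef[of j] by auto
  show "P j - {0..<x0} = {x0 + T j..<x0 + T (Suc j)}" if "j < q" for j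
    using Sx[of "Suc j"] that Pdef[of j] by auto
  have cardP: "card (P j) = k" if "j < q" for j
  proof -
    have "card (P j) = card {S j..<S (Suc j)} + card {x0 + T j..<x0 + T (Suc j)}"
      unfolding Pdef[of j] using Sx[of "Suc j"] that by (intro card_Un_disjoint) auto
    then show ?thesis using sz[OF that] by simp
  qed
  have disj: "P i \<inter> P j = {}" if "i < q" "j < q" "i \<noteq> j" for i j
  proof -
    have "P i \<inter> P j = {}" if "i < j" "j < q" for i j
    proof -
      have "S (Suc i) \<le> S j" "T (Suc i) \<le> T j" using Sle Tle that by auto
      moreover have "S (Suc j) \<le> x0" "S (Suc i) \<le> x0" using Sx that by auto
      ultimately show ?thesis unfolding Pdef by auto
    qed
    note H = this
    show ?thesis
    proof (cases "i < j")
      case True then show ?thesis using H that by blast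
    next
      case False then have "j < i" using that by simp
      then show ?thesis using H[of j i] that by (simp add: Int_commute)
    qed
  qed
  have ne: "P j \<noteq> {}" if "j < q" for j using cardP[OF that] k1 by auto
  show inj: "inj_on P {..<q}"
  proof (rule inj_onI)
    fix i j assume "i \<in> {..<q}" "j \<in> {..<q}" "P i = P j"
    then show "i = j" using disj[of i j] ne[of i] by auto
  qed
  have U1: "(\<Union>j<q. {S j..<S (Suc j)}) = {0..<x0}" using union_intervals[of S q, OF mS] S0 Sq by simp
  have U2: "(\<Union>j<q. {x0 + T j..<x0 + T (Suc j)}) = {x0..<n}"
  proof -
    have m2: "\<And>j. x0 + T j \<le> x0 + T (Suc j)" using mT by simp
    have "(\<Union>j<q. {x0 + T j..<x0 + T (Suc j)}) = {x0 + T 0..<x0 + T q}"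
      using union_intervals[of "\<lambda>j. x0 + T j" q, OF m2] by simp
    then show ?thesis using T0 Tq xn by simp
  qed
  have "\<Union>(P ` {..<q}) = (\<Union>j<q. {S j..<S (Suc j)}) \<union> (\<Union>j<q. {x0 + T j..<x0 + T (Suc j)})"
    using Pdef by auto
  also have "\<dots> = {0..<n}" using U1 U2 xn by auto
  finally have U: "\<Union>(P ` {..<q}) = {0..<n}" .
  show "Kk_factor k n (P ` {..<q})"
    unfolding Kk_factor_def
  proof (intro conjI partition_onI ballI)
    show "\<Union>(P ` {..<q}) = {0..<n}" by (rule U)
    show "disjnt p p'" if "p \<in> P ` {..<q}" "p' \<in> P ` {..<q}" "p \<noteq> p'" for p p'
      using that disj by (auto simp: disjnt_def)
    show "{} \<notin> P ` {..<q}" using ne by auto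
    show "card p = k" if "p \<in> P ` {..<q}" for p using that cardP by auto
  qed
qed


lemma real_choose2: "real (n choose 2) = real n * (real n - 1) / 2"
proof -
  have "even (n * (n - 1))" by (cases n) auto
  then have "real (n * (n - 1) div 2) = real (n * (n - 1)) / 2"
    by (simp add: real_of_nat_div)
  then show ?thesis by (cases n) (auto simp: choose_two algebra_simps)
qed

lemma count_sum:
  assumes F: "Kk_factor k n F"
  shows "colour_count x Red F d = (\<Sum>P\<in>F. card {e. e \<subseteq> P \<and> card e = 2 \<and> bip_colour x Red e = d})"
proof -
  have part: "partition_on {0..<n} F" using F by (simp add: Kk_factor_def)
  have finF: "finite F" using finite_elements[OF _ part] by simp
  have finP: "finite P" if "P \<in> F" for P using partition_onD1[OF part] that
    by (metis Union_upper finite_atLeastLessThan finite_subset)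
  have eq: "{e \<in> factor_edges F. bip_colour x Red e = d} =
     (\<Union>P\<in>F. {e. e \<subseteq> P \<and> card e = 2 \<and> bip_colour x Red e = d})"
    by (auto simp: factor_edges_def)
  have "card (\<Union>P\<in>F. {e. e \<subseteq> P \<and> card e = 2 \<and> bip_colour x Red e = d}) =
     (\<Sum>P\<in>F. card {e. e \<subseteq> P \<and> card e = 2 \<and> bip_colour x Red e = d})"
  proof (rule card_UN_disjoint[OF finF])
    show "\<forall>P\<in>F. finite {e. e \<subseteq> P \<and> card e = 2 \<and> bip_colour x Red e = d}"
      using finP by (auto intro: finite_subset[of _ "Pow _"])
    show "\<forall>P\<in>F. \<forall>Q\<in>F. P \<noteq> Q \<longrightarrow> {e. e \<subseteq> P \<and> card e = 2 \<and> bip_colour x Red e = d} \<inter>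
        {e. e \<subseteq> Q \<and> card e = 2 \<and> bip_colour x Red e = d} = {}"
    proof (intro ballI impI)
      fix P Q assume PQ: "P \<in> F" "Q \<in> F" "P \<noteq> Q"
      then have "P \<inter> Q = {}" using partition_onD2[OF part] by (auto simp: pairwise_def disjnt_def)
      then show "{e. e \<subseteq> P \<and> card e = 2 \<and> bip_colour x Red e = d} \<inter>
        {e. e \<subseteq> Q \<and> card e = 2 \<and> bip_colour x Red e = d} = {}"
      proof (intro equalityI subsetI)
        fix e assume "e \<in> {e. e \<subseteq> P \<and> card e = 2 \<and> bip_colour x Red e = d} \<inter>
          {e. e \<subseteq> Q \<and> card e = 2 \<and> bip_colour x Red e = d}"
        then have "e \<subseteq> P \<inter> Q" "card e = 2" by auto
        with \<open>P \<inter> Q = {}\<close> have False by simp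
        then show "e \<in> {}" ..
      qed simp
    qed
  qed
  then show ?thesis unfolding colour_count_def eq .
qed

lemma part_blue:
  assumes "finite P"
  shows "card {e. e \<subseteq> P \<and> card e = 2 \<and> bip_colour x Red e = Blue} = card (P - {0..<x}) choose 2"
proof -
  have "{e. e \<subseteq> P \<and> card e = 2 \<and> bip_colour x Red e = Blue} = {e. e \<subseteq> P - {0..<x} \<and> card e = 2}"
    by (auto simp: bip_colour_def other_colour_def)
  then show ?thesis using n_subsets[of "P - {0..<x}" 2] assms by simp
qed

lemma part_red:
  assumes "finite P"
  shows "real (card {e. e \<subseteq> P \<and> card e = 2 \<and> bip_colour x Red e = Red}) =
     real (card P choose 2) - real (card (P - {0..<x}) choose 2)"
proof -
  let ?A = "{e. e \<subseteq> P \<and> card e = 2}" and ?B = "{e. e \<subseteq> P - {0..<x} \<and> card e = 2}"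
  have e1: "{e. e \<subseteq> P \<and> card e = 2 \<and> bip_colour x Red e = Red} = ?A - ?B"
    by (auto simp: bip_colour_def other_colour_def)
  have finA: "finite ?A" using assms by (auto intro: finite_subset[of _ "Pow P"])
  have sub: "?B \<subseteq> ?A" by auto
  have e2: "card (?A - ?B) = card ?A - card ?B"
    using finA sub by (intro card_Diff_subset) (auto intro: finite_subset)
  have le: "card ?B \<le> card ?A" using finA sub by (intro card_mono)
  have "real (card (?A - ?B)) = real (card ?A) - real (card ?B)"
    using e2 le by simp
  moreover have "card ?A = card P choose 2" by (rule n_subsets[OF assms])
  moreover have "card ?B = card (P - {0..<x}) choose 2" using assms by (intro n_subsets) simp
  ultimately show ?thesis unfolding e1 by simp
qed


lemma factor_sums:
  assumes F: "Kk_factor k n F" and xn: "x \<le> n"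
  shows "(\<Sum>P\<in>F. card (P - {0..<x})) = n - x" "real (card F) * real k = real n"
    "finite F" "\<And>P. P \<in> F \<Longrightarrow> finite P \<and> card P = k"
proof -
  have part: "partition_on {0..<n} F" using F by (simp add: Kk_factor_def)
  show finF: "finite F" using finite_elements[OF _ part] by simp
  have finP: "finite P" if "P \<in> F" for P using partition_onD1[OF part] that
    by (metis Union_upper finite_atLeastLessThan finite_subset)
  have dis: "\<forall>P\<in>F. \<forall>Q\<in>F. P \<noteq> Q \<longrightarrow> P \<inter> Q = {}"
    using partition_onD2[OF part] by (auto simp: pairwise_def disjnt_def)
  have "card (\<Union>P\<in>F. P - {0..<x}) = (\<Sum>P\<in>F. card (P - {0..<x}))"
    using dis finP by (intro card_UN_disjoint[OF finF]) auto
  moreover have "(\<Union>P\<in>F. P - {0..<x}) = {x..<n}" using partition_onD1[OF part] by auto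
  ultimately show "(\<Sum>P\<in>F. card (P - {0..<x})) = n - x" by simp
  have "card (\<Union>P\<in>F. P) = (\<Sum>P\<in>F. card P)"
    using dis finP by (intro card_UN_disjoint[OF finF]) auto
  moreover have "(\<Union>P\<in>F. P) = {0..<n}" using partition_onD1[OF part] by auto
  moreover have "(\<Sum>P\<in>F. card P) = card F * k" using F by (simp add: Kk_factor_def)
  ultimately show "real (card F) * real k = real n" by (metis card_atLeastLessThan diff_zero of_nat_mult)
  show "\<And>P. P \<in> F \<Longrightarrow> finite P \<and> card P = k" using finP F by (auto simp: Kk_factor_def)
qed

lemma tangent: "real b * (real b - 1) - real j * (real j - 1) \<le> 2 * (real b - 1) * (real b - real j)"
proof -
  have "(int b - int j) * (1 - (int b - int j)) \<le> 0"
    by (cases "int b - int j \<le> 0") (auto intro: mult_nonpos_nonneg mult_nonneg_nonpos)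
  then have "real_of_int ((int b - int j) * (1 - (int b - int j))) \<le> 0" by linarith
  then have "(real b - real j) * (1 - (real b - real j)) \<le> 0" by simp
  then show ?thesis by (simp add: algebra_simps)
qed

lemma tangent_aux:
  fixes B J K :: real
  assumes "B * (B - 1) - J * (J - 1) \<le> 2 * (B - 1) * (B - J)"
  shows "K * (K - 1) / 2 - J * (J - 1) / 2 \<le> (K * (K - 1) / 2 - B * (B - 1) / 2 + (B - 1) * B) - (B - 1) * J"
proof -
  have e: "((K * (K - 1) / 2 - B * (B - 1) / 2 + (B - 1) * B) - (B - 1) * J) - (K * (K - 1) / 2 - J * (J - 1) / 2)
     = (2 * (B - 1) * (B - J) - (B * (B - 1) - J * (J - 1))) / 2" by (simp add: field_simps)
  have "0 \<le> (2 * (B - 1) * (B - J) - (B * (B - 1) - J * (J - 1))) / 2" using assms by simp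
  then have "0 \<le> ((K * (K - 1) / 2 - B * (B - 1) / 2 + (B - 1) * B) - (B - 1) * J) - (K * (K - 1) / 2 - J * (J - 1) / 2)"
    unfolding e .
  then show ?thesis by simp
qed

lemma upper_bounds:
  assumes F: "Kk_factor k n F" and xn: "x \<le> n"
  shows "real (colour_count x Red F Blue) \<le> (real k - 1) * (real n - real x) / 2"
    "real (colour_count x Red F Red) \<le> real (card F) * (real k * (real k - 1) / 2 - real b * (real b - 1) / 2
        + (real b - 1) * real b) - (real b - 1) * (real n - real x)"
proof -
  note S = factor_sums[OF F xn]
  have sumj: "(\<Sum>P\<in>F. real (card (P - {0..<x}))) = real n - real x"
    using S(1) xn by (metis of_nat_diff of_nat_sum)
  have jk: "card (P - {0..<x}) \<le> k" if "P \<in> F" for P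
    using S(4)[OF that] by (metis card_mono Diff_subset)
  have "real (colour_count x Red F Blue) = (\<Sum>P\<in>F. real (card (P - {0..<x}) choose 2))"
    using count_sum[OF F, of x Blue] part_blue S(4) by simp
  also have "\<dots> \<le> (\<Sum>P\<in>F. (real k - 1) * real (card (P - {0..<x})) / 2)"
  proof (rule sum_mono)
    fix P assume P: "P \<in> F"
    have "real (card (P - {0..<x})) - 1 \<le> real k - 1" using jk[OF P] by simp
    then have "real (card (P - {0..<x})) * (real (card (P - {0..<x})) - 1) \<le> real (card (P - {0..<x})) * (real k - 1)"
      by (intro mult_left_mono) auto
    then have "real (card (P - {0..<x})) * (real (card (P - {0..<x})) - 1) / 2 \<le> real (card (P - {0..<x})) * (real k - 1) / 2"
      by (rule divide_right_mono) simp
    then show "real (card (P - {0..<x}) choose 2) \<le> (real k - 1) * real (card (P - {0..<x})) / 2"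
      unfolding real_choose2 by (simp add: mult.commute)
  qed
  also have "\<dots> = (real k - 1) * (\<Sum>P\<in>F. real (card (P - {0..<x}))) / 2"
    by (simp add: sum_distrib_left sum_divide_distrib)
  finally show "real (colour_count x Red F Blue) \<le> (real k - 1) * (real n - real x) / 2"
    using sumj by simp
  have "real (colour_count x Red F Red) = (\<Sum>P\<in>F. real (card P choose 2) - real (card (P - {0..<x}) choose 2))"
    using count_sum[OF F, of x Red] part_red S(4) by simp
  also have "\<dots> \<le> (\<Sum>P\<in>F. (real k * (real k - 1) / 2 - real b * (real b - 1) / 2
        + (real b - 1) * real b) - (real b - 1) * real (card (P - {0..<x})))"
  proof (rule sum_mono)
    fix P assume P: "P \<in> F"
    show "real (card P choose 2) - real (card (P - {0..<x}) choose 2) \<le> (real k * (real k - 1) / 2 - real b * (real b - 1) / 2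
        + (real b - 1) * real b) - (real b - 1) * real (card (P - {0..<x}))"
      using tangent_aux[OF tangent[of b "card (P - {0..<x})"], of "real (card P)"] S(4)[OF P]
      unfolding real_choose2 by simp
  qed
  also have "\<dots> = real (card F) * (real k * (real k - 1) / 2 - real b * (real b - 1) / 2
        + (real b - 1) * real b) - (real b - 1) * (\<Sum>P\<in>F. real (card (P - {0..<x})))"
    by (simp add: sum_subtractf sum_distrib_left)
  finally show "real (colour_count x Red F Red) \<le> real (card F) * (real k * (real k - 1) / 2 - real b * (real b - 1) / 2
        + (real b - 1) * real b) - (real b - 1) * (real n - real x)"
    using sumj by simp
qed


lemma interval_counts:
  fixes S T :: "nat \<Rightarrow> nat"
  assumes mS: "\<And>j. S j \<le> S (Suc j)" and mT: "\<And>j. T j \<le> T (Suc j)"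
    and S0: "S 0 = 0" and T0: "T 0 = 0" and Sq: "S q = x0" and Tq: "T q = n - x0" and xn: "x0 \<le> n"
    and sz: "\<And>j. j < q \<Longrightarrow> S (Suc j) - S j + (T (Suc j) - T j) = k" and k1: "k \<ge> 1"
    and Pdef: "\<And>j. P j = {S j..<S (Suc j)} \<union> {x0 + T j..<x0 + T (Suc j)}"
  shows "real (colour_count x0 Red (P ` {..<q}) Red) =
      (\<Sum>j<q. real (k choose 2) - real ((T (Suc j) - T j) choose 2))"
    "real (colour_count x0 Red (P ` {..<q}) Blue) = (\<Sum>j<q. real ((T (Suc j) - T j) choose 2))"
proof -
  note TI = two_interval_factor[OF mS mT S0 T0 Sq Tq xn sz k1 Pdef]
  note S = factor_sums[OF TI(1) xn]
  have cP: "card (P j) = k" "card (P j - {0..<x0}) = T (Suc j) - T j" "finite (P j)" if "j < q" for j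
    using S(4)[of "P j"] that TI(4)[of j] by auto
  have "real (colour_count x0 Red (P ` {..<q}) Red) =
      (\<Sum>Q\<in>P ` {..<q}. real (card Q choose 2) - real (card (Q - {0..<x0}) choose 2))"
    using count_sum[OF TI(1), of x0 Red] part_red S(4) by simp
  also have "\<dots> = (\<Sum>j<q. real (card (P j) choose 2) - real (card (P j - {0..<x0}) choose 2))"
    by (rule sum.reindex_cong[OF TI(2)]) auto
  also have "\<dots> = (\<Sum>j<q. real (k choose 2) - real ((T (Suc j) - T j) choose 2))"
    using cP by (intro sum.cong) auto
  finally show "real (colour_count x0 Red (P ` {..<q}) Red) =
      (\<Sum>j<q. real (k choose 2) - real ((T (Suc j) - T j) choose 2))" .
  have "real (colour_count x0 Red (P ` {..<q}) Blue) =
      (\<Sum>Q\<in>P ` {..<q}. real (card (Q - {0..<x0}) choose 2))"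
    using count_sum[OF TI(1), of x0 Blue] part_blue S(4) by simp
  also have "\<dots> = (\<Sum>j<q. real (card (P j - {0..<x0}) choose 2))"
    by (rule sum.reindex_cong[OF TI(2)]) auto
  also have "\<dots> = (\<Sum>j<q. real ((T (Suc j) - T j) choose 2))"
    using cP by (intro sum.cong) auto
  finally show "real (colour_count x0 Red (P ` {..<q}) Blue) = (\<Sum>j<q. real ((T (Suc j) - T j) choose 2))" .
qed

lemma sum_if_split:
  fixes A B :: real
  assumes "r \<le> q"
  shows "(\<Sum>j<q. if j < r then A else B) = real r * A + (real q - real r) * B"
  using assms
proof (induction q)
  case 0 then show ?case by simp
next
  case (Suc q)
  show ?case
  proof (cases "r \<le> q")
    case True
    then show ?thesis using Suc by (simp add: algebra_simps)
  next
    case False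
    then have "r = Suc q" using Suc by simp
    moreover have "(\<Sum>j<q. if j < Suc q then A else B) = real q * A" by simp
    ultimately show ?thesis by (simp add: algebra_simps)
  qed
qed

lemma factor_exists:
  assumes "k dvd n" "k \<ge> 1"
  shows "\<exists>F. Kk_factor k n F"
proof -
  obtain q where n: "n = k * q" using assms by (auto elim: dvdE)
  define P where "P j = {(\<lambda>_. 0::nat) j..<(\<lambda>_. 0::nat) (Suc j)} \<union> {0 + j * k..<0 + Suc j * k}" for j
  have "Kk_factor k n (P ` {..<q})"
    by (rule two_interval_factor(1)[of "\<lambda>_. 0" "\<lambda>j. j * k" q 0 n k P])
      (use n assms in \<open>auto simp: P_def\<close>)
  then show ?thesis by blast
qed


lemma alg:
  fixes K B N D q r x m :: real
  assumes N: "N = B^2 + (K - 2) * B - K * (K - 1)" and D: "D = 2 * B + K - 3"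
    and q: "q = D * K" and r: "r = N * K" and x: "x = q * (K - B) + r" and m: "m = q * K"
  shows "q * (K * (K - 1) / 2 - B * (B - 1) / 2 + (B - 1) * B) - (B - 1) * (m - x) = (K - 1) * (m - x) / 2"
    "q * (K * (K - 1) / 2) - (r * ((B - 1) * (B - 1 - 1) / 2) + (q - r) * (B * (B - 1) / 2)) = (K - 1) * (m - x) / 2"
proof -
  have "2 * (q * (K * (K - 1) / 2 - B * (B - 1) / 2 + (B - 1) * B) - (B - 1) * (m - x)) = 2 * ((K - 1) * (m - x) / 2)"
    unfolding m x q r N D by (simp add: field_simps power2_eq_square)
  then show "q * (K * (K - 1) / 2 - B * (B - 1) / 2 + (B - 1) * B) - (B - 1) * (m - x) = (K - 1) * (m - x) / 2"
    by simp
  have "2 * (q * (K * (K - 1) / 2) - (r * ((B - 1) * (B - 1 - 1) / 2) + (q - r) * (B * (B - 1) / 2))) = 2 * ((K - 1) * (m - x) / 2)"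
    unfolding m x q r N D by (simp add: field_simps power2_eq_square)
  then show "q * (K * (K - 1) / 2) - (r * ((B - 1) * (B - 1 - 1) / 2) + (q - r) * (B * (B - 1) / 2)) = (K - 1) * (m - x) / 2"
    by simp
qed


theorem lemma3p5:
  fixes k :: nat
  assumes "k \<ge> 2"
  shows "\<exists>m x c. 0 < m \<and> x \<le> m \<and>
    (\<exists>F. Kk_factor k m F \<and> real (colour_count x c F Red) \<ge> lambda_k k * real m) \<and>
    (\<exists>F. Kk_factor k m F \<and> real (colour_count x c F Blue) \<ge> lambda_k k * real m)"
proof -
  define Nf :: "nat \<Rightarrow> int" where "Nf b = int b ^ 2 + (int k - 2) * int b - int k * (int k - 1)" for b
  have Nk: "Nf k \<ge> 0" using assms unfolding Nf_def by (simp add: power2_eq_square algebra_simps)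
  define b where "b = (LEAST b. Nf b \<ge> 0)"
  have Nb: "Nf b \<ge> 0" unfolding b_def using LeastI[of "\<lambda>b. Nf b \<ge> 0", OF Nk] .
  have bk: "b \<le> k" unfolding b_def using Least_le[of "\<lambda>b. Nf b \<ge> 0", OF Nk] .
  have N0: "Nf 0 < 0" using assms unfolding Nf_def by simp
  have b1: "b \<ge> 1" using Nb N0 by (cases b) auto
  have Nb1: "Nf (b - 1) < 0"
    using not_less_Least[of "b - 1" "\<lambda>b. Nf b \<ge> 0"] b1 unfolding b_def[symmetric] by linarith
  have diff: "Nf b - Nf (b - 1) = 2 * int b + int k - 3"
  proof -
    obtain c where c: "b = Suc c" using b1 by (cases b) auto
    show ?thesis unfolding c Nf_def by (simp add: power2_eq_square algebra_simps)
  qed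
  define d0 where "d0 = nat (2 * int b + int k - 3)"
  define n0 where "n0 = nat (Nf b)"
  have n0d0: "n0 < d0" using Nb Nb1 diff unfolding n0_def d0_def by linarith
  have d0pos: "d0 \<ge> 1" using b1 assms unfolding d0_def by linarith
  define a where "a = k - b"
  have ab: "a + b = k" using bk unfolding a_def by simp
  define q where "q = d0 * k"
  define r where "r = n0 * k"
  define x where "x = q * a + r"
  define m where "m = q * k"
  have rq: "r \<le> q" using n0d0 unfolding r_def q_def by simp
  have qk: "q * k = q * a + q * b" using ab by (metis add_mult_distrib2)
  have qb: "q \<le> q * b" using b1 by simp
  have xm: "x \<le> m" unfolding x_def m_def using qk rq qb by linarith
  have mpos: "0 < m" unfolding m_def q_def using d0pos assms by simp
  define K where "K = real k"
  define B where "B = real b"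
  have rn0: "real n0 = B^2 + (K - 2) * B - K * (K - 1)"
  proof -
    have "real n0 = real_of_int (Nf b)" unfolding n0_def using Nb by simp
    then show ?thesis unfolding Nf_def K_def B_def by simp
  qed
  have rd0: "real d0 = 2 * B + K - 3"
  proof -
    have "real d0 = real_of_int (2 * int b + int k - 3)" unfolding d0_def using d0pos d0_def by simp
    then show ?thesis unfolding K_def B_def by simp
  qed
  have ra: "real a = K - B" unfolding a_def K_def B_def using bk by simp
  have rq': "real q = real d0 * K" unfolding q_def K_def by simp
  have rr: "real r = real n0 * K" unfolding r_def K_def by simp
  have rx: "real x = real q * (K - B) + real r" unfolding x_def using ra by simp
  have rm: "real m = real q * K" unfolding m_def K_def by simp
  note AL = alg[OF rn0 rd0 rq' rr rx rm]
  define V where "V = (K - 1) * (real m - real x) / 2"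
  have K2: "K \<ge> 2" unfolding K_def using assms by simp
  have kdvd: "k dvd m" unfolding m_def by simp
  have L: "lambda_k k \<le> V / real m"
    unfolding lambda_k_def
  proof (rule cSup_least)
    show "{lam. \<forall>n x c. k dvd n \<longrightarrow> x \<le> n \<longrightarrow>
      (\<exists>F d. Kk_factor k n F \<and> real (colour_count x c F d) \<ge> lam * real n)} \<noteq> {}"
    proof -
      have "(0::real) \<in> {lam. \<forall>n x c. k dvd n \<longrightarrow> x \<le> n \<longrightarrow>
        (\<exists>F d. Kk_factor k n F \<and> real (colour_count x c F d) \<ge> lam * real n)}"
        using factor_exists assms by fastforce
      then show ?thesis by blast
    qed
  next
    fix lam assume "lam \<in> {lam. \<forall>n x c. k dvd n \<longrightarrow> x \<le> n \<longrightarrow>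
      (\<exists>F d. Kk_factor k n F \<and> real (colour_count x c F d) \<ge> lam * real n)}"
    then obtain F d where F: "Kk_factor k m F" and c: "real (colour_count x Red F d) \<ge> lam * real m"
      using kdvd xm by blast
    have cF: "real (card F) = real q"
      using factor_sums(2)[OF F xm] rm K2 unfolding K_def by simp
    have "real (colour_count x Red F d) \<le> V"
    proof (cases d)
      case Red
      then show ?thesis using upper_bounds(2)[OF F xm, of b] cF AL(1) unfolding V_def K_def B_def by simp
    next
      case Blue
      then show ?thesis using upper_bounds(1)[OF F xm] unfolding V_def K_def by simp
    qed
    then have "lam * real m \<le> V" using c by linarith
    then show "lam \<le> V / real m" using mpos by (simp add: pos_le_divide_eq)
  qed
  then have LV: "lambda_k k * real m \<le> V" using mpos by (simp add: pos_le_divide_eq)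
  define S1 where "S1 j = j * a + min j r" for j
  define T1 where "T1 j = j * b - min j r" for j
  define P1 where "P1 j = {S1 j..<S1 (Suc j)} \<union> {x + T1 j..<x + T1 (Suc j)}" for j
  have T1d: "T1 (Suc j) - T1 j = (if j < r then b - 1 else b)" for j
  proof -
    have "min j r \<le> j * b" using b1 by (metis le_trans min.cobounded1 mult_le_mono2 nat_mult_1_right)
    moreover have "min (Suc j) r \<le> Suc j * b" using b1 by (metis le_trans min.cobounded1 mult_le_mono2 nat_mult_1_right)
    ultimately show ?thesis unfolding T1_def using b1 by (auto simp: min_def)
  qed
  have S1d: "S1 (Suc j) - S1 j = (if j < r then a + 1 else a)" for j
    unfolding S1_def by (auto simp: min_def)
  have h1: "\<And>j. S1 j \<le> S1 (Suc j)" unfolding S1_def by (simp add: min_def)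
  have h2: "\<And>j. T1 j \<le> T1 (Suc j)"
  proof -
    fix j
    have "min j r \<le> j * b" using b1 by (metis le_trans min.cobounded1 mult_le_mono2 nat_mult_1_right)
    then show "T1 j \<le> T1 (Suc j)" unfolding T1_def using b1 by (auto simp: min_def)
  qed
  have h5: "S1 q = x" unfolding S1_def x_def using rq by simp
  have h6: "T1 q = m - x" unfolding T1_def m_def x_def using rq qk qb by simp
  have h8: "\<And>j. j < q \<Longrightarrow> S1 (Suc j) - S1 j + (T1 (Suc j) - T1 j) = k"
    using S1d T1d ab b1 by auto
  have k1: "k \<ge> 1" using assms by simp
  have h3: "S1 0 = 0" and h4: "T1 0 = 0" unfolding S1_def T1_def by simp_all
  note R1 = two_interval_factor(1)[OF h1 h2 h3 h4 h5 h6 xm h8 k1 P1_def]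
  note R2 = interval_counts(1)[OF h1 h2 h3 h4 h5 h6 xm h8 k1 P1_def]
  have "real (colour_count x Red (P1 ` {..<q}) Red) =
      (\<Sum>j<q. real (k choose 2) - real ((T1 (Suc j) - T1 j) choose 2))" by (rule R2)
  also have "\<dots> = (\<Sum>j<q. if j < r then real (k choose 2) - real ((b - 1) choose 2) else real (k choose 2) - real (b choose 2))"
    by (intro sum.cong) (auto simp: T1d)
  also have "\<dots> = real r * (real (k choose 2) - real ((b - 1) choose 2)) + (real q - real r) * (real (k choose 2) - real (b choose 2))"
    by (rule sum_if_split[OF rq])
  also have "\<dots> = V"
  proof -
    have rb: "real (b - 1) = B - 1" unfolding B_def using b1 by simp
    have E1: "real r * (K*(K-1)/2 - (B-1)*(B-1-1)/2) + (real q - real r)*(K*(K-1)/2 - B*(B-1)/2)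
       = real q*(K*(K-1)/2) - (real r*((B-1)*(B-1-1)/2) + (real q - real r)*(B*(B-1)/2))"
      by (simp add: field_simps)
    show ?thesis unfolding real_choose2 rb using E1 AL(2) unfolding V_def K_def B_def by linarith
  qed
  finally have Rw: "real (colour_count x Red (P1 ` {..<q}) Red) = V" .
  define e where "e = d0 * a + n0"
  have xe: "x = e * k" unfolding x_def e_def q_def r_def by (simp add: algebra_simps)
  have eq: "e \<le> q"
  proof -
    have "e \<le> d0 * a + d0" unfolding e_def using n0d0 by simp
    also have "\<dots> = d0 * (a + 1)" by simp
    also have "\<dots> \<le> d0 * k" using ab b1 by (intro mult_le_mono2) simp
    finally show ?thesis unfolding q_def .
  qed
  define S2 where "S2 j = min j e * k" for j
  define T2 where "T2 j = (j - e) * k" for j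
  define P2 where "P2 j = {S2 j..<S2 (Suc j)} \<union> {x + T2 j..<x + T2 (Suc j)}" for j
  have T2d: "T2 (Suc j) - T2 j = (if j < e then 0 else k)" for j
  proof (cases "j < e")
    case True then have "Suc j - e = 0" "j - e = 0" by simp_all
    then show ?thesis unfolding T2_def using True by simp
  next
    case False then have "Suc j - e = Suc (j - e)" by (simp add: Suc_diff_le)
    then show ?thesis unfolding T2_def using False by simp
  qed
  have g1: "\<And>j. S2 j \<le> S2 (Suc j)" unfolding S2_def by (simp add: min_def)
  have g2: "\<And>j. T2 j \<le> T2 (Suc j)" unfolding T2_def by (simp add: diff_le_mono)
  have g5: "S2 q = x" unfolding S2_def using eq xe by simp
  have g6: "T2 q = m - x" unfolding T2_def m_def using xe by (simp add: diff_mult_distrib)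
  have g8: "\<And>j. j < q \<Longrightarrow> S2 (Suc j) - S2 j + (T2 (Suc j) - T2 j) = k"
  proof -
    fix j assume "j < q"
    have "S2 (Suc j) - S2 j = (if j < e then k else 0)"
    proof (cases "j < e")
      case True then have "min (Suc j) e = Suc j" "min j e = j" by simp_all
      then show ?thesis unfolding S2_def using True by simp
    next
      case False then have "min (Suc j) e = e" "min j e = e" by simp_all
      then show ?thesis unfolding S2_def using False by simp
    qed
    then show "S2 (Suc j) - S2 j + (T2 (Suc j) - T2 j) = k" using T2d[of j] by simp
  qed
  have g3: "S2 0 = 0" and g4: "T2 0 = 0" unfolding S2_def T2_def by simp_all
  note B1 = two_interval_factor(1)[OF g1 g2 g3 g4 g5 g6 xm g8 k1 P2_def]
  note B2 = interval_counts(2)[OF g1 g2 g3 g4 g5 g6 xm g8 k1 P2_def]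
  have "real (colour_count x Red (P2 ` {..<q}) Blue) =
      (\<Sum>j<q. real ((T2 (Suc j) - T2 j) choose 2))" by (rule B2)
  also have "\<dots> = (\<Sum>j<q. if j < e then 0 else real (k choose 2))"
    by (intro sum.cong) (auto simp: T2d)
  also have "\<dots> = (real q - real e) * real (k choose 2)"
    using sum_if_split[OF eq, of 0 "real (k choose 2)"] by simp
  also have "\<dots> = V"
  proof -
    have h: "real m - real x = (real q - real e) * K" unfolding m_def xe K_def by (simp add: algebra_simps)
    show ?thesis unfolding V_def real_choose2 K_def[symmetric] h by (simp add: field_simps)
  qed
  finally have Bw: "real (colour_count x Red (P2 ` {..<q}) Blue) = V" .
  show ?thesis
    using mpos xm R1 B1 Rw Bw LV by (intro exI[of _ m] exI[of _ x] exI[of _ Red]) auto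
qed

end
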